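(* For every prime power $q$, $M_q\!\left(\frac{q-1}{q+1}\right)<\frac{1}{q+1}$.
   Context: $H_q(x)=x\log_q(q-1)-x\log_q x-(1-x)\log_q(1-x)$ is the $q$-ary entropy and $M_q(\delta)=H_q\!\left(\frac1q\left(q-1-(q-2)\delta-2\sqrt{(q-1)\delta(1-\delta)}\right)\right)$. *)

theory Defs
  imports Complex_Main "HOL-Number_Theory.Prime_Powers"
begin

text \<open>q-ary entropy H_q(x) = x log_q(q-1) - x log_q x - (1-x) log_q(1-x).
  (Isabelle's log q 0 = 0, so the usual convention 0 log 0 = 0 holds.)\<close>
definition Hq :: "real \<Rightarrow> real \<Rightarrow> real" where
  "Hq q x = x * log q (q - 1) - x * log q x - (1 - x) * log q (1 - x)"

definition Mq :: "real \<Rightarrow> real \<Rightarrow> real" where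
  "Mq q \<delta> = Hq q ((1 / q) * (q - 1 - (q - 2) * \<delta> - 2 * sqrt ((q - 1) * \<delta> * (1 - \<delta>))))"

end

theory Submission
  imports Defs
begin

lemma sqrt2_bounds: "1.4142 \<le> sqrt (2::real)" "sqrt (2::real) \<le> 1.4143"
proof -
  show "1.4142 \<le> sqrt (2::real)" by (rule real_le_rsqrt) (simp add: power2_eq_square)
  show "sqrt (2::real) \<le> 1.4143" by (rule real_le_lsqrt) (simp_all add: power2_eq_square)
qed

lemma ln_le_lin: "(0::real) < y \<Longrightarrow> ln y \<le> y - 1"
  by (rule ln_le_minus_one)

lemma main_ineq:
  fixes Q :: real
  assumes Q: "Q \<ge> 2" and Qcase: "Q = 2 \<or> Q \<ge> 3"
  shows "(3 - 2 * sqrt 2) * (Q - 1) * (ln Q + ln (Q + 1) + ln (1 / (3 - 2 * sqrt 2)) + 1) < Q * ln Q"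
proof -
  define s where "s = sqrt (2::real)"
  define c where "c = 3 - 2 * s"
  have s1: "1.4142 \<le> s" and s2: "s \<le> 1.4143" using sqrt2_bounds by (auto simp: s_def)
  have ss: "s * s = 2" by (simp add: s_def)
  have cpos: "c > 0" and cup: "c \<le> 0.1716" using s1 s2 by (auto simp: c_def)
  have ln2up: "ln (2::real) \<le> 2 * (s - 1)"
  proof -
    have "ln 2 = ln (s * s)" using ss by simp
    also have "\<dots> = 2 * ln s" using s1 by (simp add: ln_mult)
    also have "\<dots> \<le> 2 * (s - 1)" using ln_le_lin[of s] s1 by simp
    finally show ?thesis .
  qed
  have ln2lo: "ln (2::real) \<ge> 1/2"
  proof -
    have "ln (1/2::real) \<le> 1/2 - 1" by (rule ln_le_lin) simp
    thus ?thesis by (simp add: ln_div)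
  qed
  have a_eq: "ln (1 / c) = 2 * ln (1 + s)"
  proof -
    have "1 / c = (1 + s) * (1 + s)" using cpos ss by (simp add: c_def field_simps)
    thus ?thesis using s1 by (simp add: ln_mult)
  qed
  have ln1s: "ln (1 + s) \<le> ln 2 + (s - 1) / 2"
  proof -
    have "ln (1 + s) = ln 2 + ln ((1 + s) / 2)" using s1 by (simp add: ln_div)
    also have "ln ((1 + s) / 2) \<le> (1 + s) / 2 - 1" using s1 by (intro ln_le_lin) simp
    finally show ?thesis by simp
  qed
  have aup0: "ln (1 / c) \<le> 5 * (s - 1)" using a_eq ln1s ln2up by linarith
  have aup: "ln (1 / c) \<le> 2.0715" using aup0 s2 by simp
  have lnQ1: "ln (Q + 1) \<le> ln Q + 1 / Q"
  proof -
    have "ln (Q + 1) = ln Q + ln ((Q + 1) / Q)" using Q by (simp add: ln_div)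
    also have "ln ((Q + 1) / Q) \<le> (Q + 1) / Q - 1" using Q by (intro ln_le_lin) simp
    also have "(Q + 1) / Q - 1 = 1 / Q" using Q by (simp add: field_simps)
    finally show ?thesis by simp
  qed
  define a where "a = ln (1 / c)"
  define L where "L = ln Q"
  have Lpos: "L > 0" using Q by (simp add: L_def)
  have "c * (Q - 1) * (L + ln (Q + 1) + a + 1) \<le> c * (Q - 1) * (2 * L + 1 / Q + a + 1)"
    using lnQ1 cpos Q by (intro mult_left_mono) (auto simp: L_def)
  also have "\<dots> < Q * L"
    using Qcase
  proof
    assume Q2: "Q = 2"
    have L2: "L = ln 2" using Q2 by (simp add: L_def)
    have "c * (2 * L + 1 / 2 + a + 1) \<le> c * (2 * L + 3.5715)"
      using cpos aup by (intro mult_left_mono) (auto simp: a_def)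
    also have "\<dots> < 2 * L"
    proof -
      have "c * 3.5715 \<le> 0.1716 * 3.5715" using cup by simp
      moreover have "(1 - c) * L \<ge> (1 - 0.1716) * (1/2)"
        using cup ln2lo L2 by (intro mult_mono) auto
      ultimately show ?thesis by (simp add: algebra_simps)
    qed
    finally show ?thesis using Q2 by simp
  next
    assume Q3: "Q \<ge> 3"
    have L1: "L \<ge> 1"
    proof -
      have "exp 1 \<le> Q" using exp_le Q3 by linarith
      hence "ln (exp 1) \<le> ln Q" using Q3 by (subst ln_le_cancel_iff) auto
      thus ?thesis by (simp add: L_def)
    qed
    have B: "2 * L + 1 / Q + a + 1 \<le> 2 * L + 3.405"
    proof -
      have "1 / Q \<le> 1 / 3" using Q3 by (intro divide_left_mono) auto
      thus ?thesis using aup by (simp add: a_def)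
    qed
    have pos: "2 * L + 1 / Q + a + 1 > 0"
    proof -
      have "a \<ge> 0" unfolding a_def using cup cpos by (auto simp: divide_simps)
      thus ?thesis using Lpos Q by (simp add: add_pos_nonneg)
    qed
    have "c * (Q - 1) * (2 * L + 1 / Q + a + 1) < c * Q * (2 * L + 1 / Q + a + 1)"
      using cpos pos by (intro mult_strict_right_mono) auto
    also have "\<dots> \<le> c * Q * (2 * L + 3.405)"
      using B cpos Q by (intro mult_left_mono) auto
    also have "\<dots> \<le> Q * L"
    proof -
      have "c * (2 * L + 3.405) \<le> L"
      proof -
        have "c * 3.405 \<le> 0.1716 * 3.405" using cup by simp
        moreover have "(1 - 2 * c) * L \<ge> (1 - 2 * 0.1716) * 1"
          using cup L1 by (intro mult_mono) auto
        ultimately show ?thesis by (simp add: algebra_simps)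
      qed
      thus ?thesis using Q by (simp add: mult.commute mult.left_commute mult_left_mono)
    qed
    finally show ?thesis .
  qed
  finally show ?thesis by (simp add: c_def s_def a_def L_def)
qed

theorem lemmaA1:
  fixes q :: nat
  assumes "primepow q"
  shows "Mq (real q) ((real q - 1) / (real q + 1)) < 1 / (real q + 1)"
proof -
  have q2: "q \<ge> 2" using primepow_gt_Suc_0[OF assms] by simp
  define Q where "Q = real q"
  have Q: "Q \<ge> 2" using q2 by (simp add: Q_def)
  have Qcase: "Q = 2 \<or> Q \<ge> 3"
  proof (cases "q = 2")
    case True thus ?thesis by (simp add: Q_def)
  next
    case False hence "q \<ge> 3" using q2 by simp
    thus ?thesis by (simp add: Q_def)
  qed
  define c where "c = 3 - 2 * sqrt (2::real)"
  have cpos: "c > 0" and cup: "c \<le> 0.1716" using sqrt2_bounds by (auto simp: c_def)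
  define d where "d = (Q - 1) / (Q + 1)"
  have d0: "d \<ge> 0" using Q by (simp add: d_def)
  have "(Q - 1) * d * (1 - d) = 2 * d\<^sup>2"
    using Q by (simp add: d_def field_simps power2_eq_square)
  hence sq: "sqrt ((Q - 1) * d * (1 - d)) = sqrt 2 * d"
    using d0 by (simp add: real_sqrt_mult)
  define x where "x = c * (Q - 1) / (Q * (Q + 1))"
  have xeq: "(1 / Q) * (Q - 1 - (Q - 2) * d - 2 * sqrt ((Q - 1) * d * (1 - d))) = x"
  proof -
    have "Q - 1 - (Q - 2) * d - 2 * (sqrt 2 * d) = (Q - 1) - ((Q - 2) + 2 * sqrt 2) * d"
      by (simp add: algebra_simps)
    also have "\<dots> = (Q - 1) * ((Q + 1) - ((Q - 2) + 2 * sqrt 2)) / (Q + 1)"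
      using Q by (simp add: d_def field_simps)
    also have "\<dots> = c * (Q - 1) / (Q + 1)"
      by (simp add: c_def algebra_simps)
    finally have "Q - 1 - (Q - 2) * d - 2 * (sqrt 2 * d) = c * (Q - 1) / (Q + 1)" .
    thus ?thesis unfolding sq using Q by (simp add: x_def)
  qed
  have xpos: "x > 0" using Q cpos by (simp add: x_def)
  have xle: "x \<le> c / Q"
  proof -
    have "(Q - 1) / (Q + 1) \<le> 1" using Q by simp
    hence "c * ((Q - 1) / (Q + 1)) \<le> c * 1" using cpos by (intro mult_left_mono) auto
    hence "(c * ((Q - 1) / (Q + 1))) / Q \<le> c / Q" using Q by (intro divide_right_mono) auto
    moreover have "x = (c * ((Q - 1) / (Q + 1))) / Q" using Q by (simp add: x_def)
    ultimately show ?thesis by simp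
  qed
  have x1: "x < 1"
  proof -
    have "c / Q \<le> c / 2" using Q cpos by (intro divide_left_mono) auto
    moreover have "c < 2" using cup by simp
    ultimately show ?thesis using xle by linarith
  qed
  have lnQpos: "ln Q > 0" using Q by simp
  define E where "E = x * ln (Q - 1) - x * ln x - (1 - x) * ln (1 - x)"
  have Hq_eq: "Hq Q x = E / ln Q"
    unfolding Hq_def E_def log_def using lnQpos by (simp add: field_simps)
  have t1: "- ((1 - x) * ln (1 - x)) \<le> x"
  proof -
    have "ln (1 / (1 - x)) \<le> 1 / (1 - x) - 1" using x1 by (intro ln_le_lin) simp
    hence "- ln (1 - x) \<le> x / (1 - x)" using x1 by (simp add: ln_div field_simps)
    hence "(1 - x) * (- ln (1 - x)) \<le> (1 - x) * (x / (1 - x))" using x1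
      by (intro mult_left_mono) auto
    thus ?thesis using x1 by simp
  qed
  have t2: "ln (Q - 1) - ln x = ln Q + ln (Q + 1) + ln (1 / c)"
  proof -
    have "(Q - 1) / x = Q * (Q + 1) * (1 / c)" using Q cpos by (simp add: x_def field_simps)
    hence "ln ((Q - 1) / x) = ln Q + ln (Q + 1) + ln (1 / c)"
      using Q cpos by (simp add: ln_mult ln_div del: times_divide_eq_right divide_divide_eq_left)
    thus ?thesis using Q xpos by (simp add: ln_div)
  qed
  have "E \<le> x * (ln Q + ln (Q + 1) + ln (1 / c) + 1)"
  proof -
    have "E = x * (ln (Q - 1) - ln x) - (1 - x) * ln (1 - x)"
      by (simp add: E_def algebra_simps)
    also have "\<dots> \<le> x * (ln Q + ln (Q + 1) + ln (1 / c)) + x" using t1 t2 by simp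
    finally show ?thesis by (simp add: algebra_simps)
  qed
  also have "\<dots> < ln Q / (Q + 1)"
  proof -
    have m: "c * (Q - 1) * (ln Q + ln (Q + 1) + ln (1 / c) + 1) < Q * ln Q"
      using main_ineq[OF Q Qcase] by (simp add: c_def)
    have "x * (ln Q + ln (Q + 1) + ln (1 / c) + 1)
        = (c * (Q - 1) * (ln Q + ln (Q + 1) + ln (1 / c) + 1)) / (Q * (Q + 1))"
      by (simp add: x_def)
    also have "\<dots> < (Q * ln Q) / (Q * (Q + 1))"
      using m Q by (intro divide_strict_right_mono) auto
    also have "\<dots> = ln Q / (Q + 1)" using Q by simp
    finally show ?thesis .
  qed
  finally have "E < ln Q / (Q + 1)" .
  hence "E / ln Q < 1 / (Q + 1)" using lnQpos Q by (simp add: field_simps)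
  thus ?thesis
    unfolding Mq_def using xeq Hq_eq by (simp add: Q_def d_def)
qed

end
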